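(* Let $n\ge1$ have canonical prime factorization $n=p_1^{\alpha_1}p_2^{\alpha_2}\cdots p_r^{\alpha_r}$, and let $d_1,\dots,d_{\tau(n)}$ be the positive divisors of $n$ (listed in any order). Then $$\det\Big[c_{d_i}\Big(\frac{n}{d_j}\Big)\Big]_{i,j=1}^{\tau(n)} = n^{\tau(n)/2}\,(-1)^{\sum_{i=1}^r \lfloor\frac{\alpha_i+1}{2}\rfloor\frac{\tau(n)}{\alpha_i+1}}.$$
   Context: For integers $m\ge1$ and $x$, the Ramanujan sum is $c_m(x)=\sum_{1\le j\le m,\ (j,m)=1} e^{2\pi i jx/m}$. $\tau(n)$ denotes the number of positive divisors of $n$. *)

theory Defs
  imports Complex_Main "HOL-Computational_Algebra.Primes" "Jordan_Normal_Form.Determinant"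
begin

definition ramanujan_sum :: "nat \<Rightarrow> int \<Rightarrow> complex" where
  "ramanujan_sum m x =
     (\<Sum>j\<in>{j\<in>{1..m}. coprime j m}. exp (2 * of_real pi * \<i> * of_nat j * of_int x / of_nat m))"

definition num_divisors :: "nat \<Rightarrow> nat" where
  "num_divisors n = card {d. d dvd n}"

end

theory Submission
  imports Defs
begin


lemma prod_eq_le_pointwise:
  fixes a b :: "'i \<Rightarrow> nat"
  assumes fin: "finite I" and pos: "\<And>i. i \<in> I \<Longrightarrow> 0 < a i"
    and le: "\<And>i. i \<in> I \<Longrightarrow> a i \<le> b i" and eq: "prod a I = prod b I" and k: "k \<in> I"
  shows "a k = b k"
proof (rule ccontr)
  assume "a k \<noteq> b k"
  with le[OF k] have lt: "a k < b k" by simp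
  have P: "prod a (I - {k}) \<le> prod b (I - {k})" by (rule prod_mono) (use le in auto)
  have P0: "0 < prod a (I - {k})" using pos fin by (simp add: prod_pos)
  have "prod a I = a k * prod a (I - {k})" using fin k by (simp add: prod.remove)
  also have "\<dots> < b k * prod a (I - {k})" using lt P0 by simp
  also have "\<dots> \<le> b k * prod b (I - {k})" using P by simp
  also have "\<dots> = prod b I" using fin k by (simp add: prod.remove)
  finally show False using eq by simp
qed

lemma det_perm_support:
  fixes A :: "complex mat" and f :: "nat \<Rightarrow> nat"
  assumes A: "A \<in> carrier_mat n n" and \<sigma>: "\<sigma> permutes {0..<n}" and inj: "inj_on f {0..<n}"
    and pos: "\<And>i. i < n \<Longrightarrow> f i > 0"
    and supp: "\<And>i j. i < n \<Longrightarrow> j < n \<Longrightarrow> A $$ (i,j) \<noteq> 0 \<Longrightarrow> f j dvd f (\<sigma> i)"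
  shows "det A = signof \<sigma> * (\<Prod>i=0..<n. A $$ (i, \<sigma> i))"
proof -
  let ?S = "{p. p permutes {0..<n}}"
  let ?g = "\<lambda>p. signof p * (\<Prod>i=0..<n. A $$ (i, p i)) :: complex"
  have finS: "finite ?S" by (simp add: finite_permutations)
  have zero: "?g p = 0" if p: "p \<in> ?S - {\<sigma>}" for p
  proof (rule ccontr)
    assume "?g p \<noteq> 0"
    then have nz: "\<And>i. i < n \<Longrightarrow> A $$ (i, p i) \<noteq> 0" by auto
    have pp: "p permutes {0..<n}" using p by simp
    have pin: "p i < n" if "i < n" for i using permutes_in_image[OF pp] that by simp
    have sin: "\<sigma> i < n" if "i < n" for i using permutes_in_image[OF \<sigma>] that by simp
    have dv: "f (p i) dvd f (\<sigma> i)" if "i < n" for i using supp[OF that pin[OF that] nz[OF that]] .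
    have le: "f (p i) \<le> f (\<sigma> i)" if "i \<in> {0..<n}" for i
      using dv[of i] pos[OF sin[of i]] that by (simp add: dvd_imp_le)
    have "prod (\<lambda>i. f (p i)) {0..<n} = prod f {0..<n}"
      using prod.permute[OF pp, of f] by (simp add: comp_def)
    also have "\<dots> = prod (\<lambda>i. f (\<sigma> i)) {0..<n}"
      using prod.permute[OF \<sigma>, of f] by (simp add: comp_def)
    finally have peq: "prod (\<lambda>i. f (p i)) {0..<n} = prod (\<lambda>i. f (\<sigma> i)) {0..<n}" .
    have "p i = \<sigma> i" for i
    proof (cases "i < n")
      case True
      have "f (p i) = f (\<sigma> i)"
        by (rule prod_eq_le_pointwise[OF _ _ le peq]) (use True pos pin in auto)
      then show ?thesis using inj pin[OF True] sin[OF True] by (auto dest: inj_onD)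
    next
      case False
      then show ?thesis using permutes_not_in[OF pp] permutes_not_in[OF \<sigma>] by simp
    qed
    then have "p = \<sigma>" by auto
    then show False using p by simp
  qed
  have "det A = sum ?g ?S" using det_def'[OF A] by simp
  also have "\<dots> = ?g \<sigma> + sum ?g (?S - {\<sigma>})" using finS \<sigma> by (simp add: sum.remove)
  also have "sum ?g (?S - {\<sigma>}) = 0" using zero by (simp add: sum.neutral)
  finally show ?thesis by simp
qed




lemma geo_sum:
  fixes k :: nat and x :: int
  assumes k: "k \<ge> 1"
  shows "(\<Sum>j\<in>{1..k}. exp (2 * of_real pi * \<i> * of_nat j * of_int x / of_nat k))
         = (if int k dvd x then of_nat k else 0)"
proof -
  define \<theta> where "\<theta> = 2 * pi * real_of_int x / real k"
  define z where "z = cis \<theta>"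
  have e: "exp (2 * of_real pi * \<i> * of_nat j * of_int x / of_nat k) = z ^ j" for j
  proof -
    have "2 * of_real pi * \<i> * of_nat j * of_int x / of_nat k = \<i> * complex_of_real (real j * \<theta>)"
      unfolding \<theta>_def by (simp add: field_simps)
    then show ?thesis unfolding z_def DeMoivre by (simp add: cis_conv_exp)
  qed
  have zk: "z ^ k = 1"
  proof -
    have "real k * \<theta> = 2 * pi * real_of_int x" unfolding \<theta>_def using k by simp
    then have "z ^ k = cis (2 * pi * real_of_int x)" unfolding z_def DeMoivre by simp
    also have "\<dots> = 1" by (simp add: cis.ctr complex_eq_iff)
    finally show ?thesis .
  qed
  show ?thesis
  proof (cases "int k dvd x")
    case True
    then obtain q where q: "x = int k * q" by blast
    have "\<theta> = 2 * pi * real_of_int q" unfolding \<theta>_def q using k by simp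
    then have "z = 1" unfolding z_def by (simp add: cis.ctr complex_eq_iff)
    then show ?thesis using True by (simp add: e)
  next
    case False
    have "z \<noteq> 1"
    proof
      assume "z = 1"
      then have "cos \<theta> = 1" unfolding z_def by (simp add: complex_eq_iff)
      then obtain m :: int where m: "\<theta> = real_of_int m * 2 * pi" by (auto simp: cos_one_2pi_int)
      then have "real_of_int x = real_of_int m * real k" unfolding \<theta>_def using k
        by (simp add: field_simps)
      then have "x = m * int k" by (metis of_int_eq_iff of_int_mult of_int_of_nat_eq)
      then show False using False by simp
    qed
    have "(\<Sum>j\<in>{1..k}. z ^ j) = z * (\<Sum>j<k. z ^ j)"
    proof -
      have "(\<Sum>j\<in>{1..k}. z ^ j) = (\<Sum>j<k. z ^ Suc j)"
        by (simp add: sum.atLeast1_atMost_eq)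
      then show ?thesis by (simp add: sum_distrib_left)
    qed
    also have "\<dots> = 0" using \<open>z \<noteq> 1\<close> zk by (simp add: geometric_sum)
    finally show ?thesis using False by (simp add: e)
  qed
qed

lemma ram_divisor_sum:
  fixes k :: nat and x :: int
  assumes k: "k \<ge> 1"
  shows "(\<Sum>d\<in>{d. d dvd k}. ramanujan_sum d x) = (if int k dvd x then of_nat k else 0)"
proof -
  let ?e = "\<lambda>j. exp (2 * of_real pi * \<i> * of_nat j * of_int x / of_nat k) :: complex"
  have fin: "finite {d. d dvd k}" using k by simp
  have "(\<Sum>j\<in>{1..k}. ?e j) = (\<Sum>d\<in>{d. d dvd k}. \<Sum>j\<in>{j\<in>{1..k}. k div gcd j k = d}. ?e j)"
    by (rule sum.group[symmetric]) (use fin in \<open>auto intro: dvd_div_mult_self[symmetric] simp: dvd_def\<close>)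
  also have "\<dots> = (\<Sum>d\<in>{d. d dvd k}. ramanujan_sum d x)"
  proof (rule sum.cong[OF refl])
    fix d assume "d \<in> {d. d dvd k}"
    then have dk: "d dvd k" by simp
    then obtain e where ke: "k = d * e" by blast
    have d0: "d > 0" and e0: "e > 0" using k ke by (auto intro!: Nat.gr0I)
    have ediv: "k div d = e" using ke d0 by simp
    show "(\<Sum>j\<in>{j\<in>{1..k}. k div gcd j k = d}. ?e j) = ramanujan_sum d x"
      unfolding ramanujan_sum_def
    proof (rule sym, rule sum.reindex_bij_witness[where j = "\<lambda>j'. j' * e" and i = "\<lambda>j. j div e"])
      fix a assume a: "a \<in> {j\<in>{1..d}. coprime j d}"
      show "a * e div e = a" using e0 by simp
      have "gcd (a * e) (d * e) = e * gcd a d" by (metis gcd_mult_distrib_nat mult.commute)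
      then have g: "gcd (a * e) k = e" using a ke by (simp add: coprime_iff_gcd_eq_1)
      show "a * e \<in> {j\<in>{1..k}. k div gcd j k = d}"
        using a e0 d0 ke g by (auto simp: mult_le_mono1)
    next
      fix b assume b: "b \<in> {j\<in>{1..k}. k div gcd j k = d}"
      then have b1: "1 \<le> b" "b \<le> k" and bd: "k div gcd b k = d" by auto
      have "k = d * gcd b k" using bd by (metis dvd_mult_div_cancel gcd_dvd2 mult.commute)
      then have gb: "gcd b k = e" using ke d0 by simp
      then have eb: "e dvd b" by (metis gcd_dvd1)
      then obtain c where bc: "b = c * e" by (metis dvd_def mult.commute)
      show "b div e * e = b" using bc e0 by simp
      have "gcd (c * e) (d * e) = e * gcd c d" by (metis gcd_mult_distrib_nat mult.commute)
      then have "e * gcd c d = e" using gb bc ke by simp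
      then have "gcd c d = 1" using e0 by simp
      moreover have "c \<ge> 1" using b1 bc by (cases c) auto
      moreover have "c \<le> d" using b1 bc ke e0 by simp
      ultimately show "b div e \<in> {j\<in>{1..d}. coprime j d}" using bc e0 by (simp add: coprime_iff_gcd_eq_1)
    next
      fix a assume a: "a \<in> {j\<in>{1..d}. coprime j d}"
      have "2 * of_real pi * \<i> * of_nat (a * e) * of_int x / of_nat k
          = 2 * of_real pi * \<i> * of_nat a * of_int x / (of_nat d :: complex)"
        using e0 d0 unfolding ke by (simp add: field_simps)
      then show "?e (a * e) = exp (2 * of_real pi * \<i> * of_nat a * of_int x / of_nat d)" by simp
    qed
  qed
  finally show ?thesis using geo_sum[OF k, of x] by simp
qed




lemma sign_involution:
  assumes "finite S" "p permutes S" "\<And>x. p (p x) = x"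
  shows "even (card {x. p x \<noteq> x}) \<and> sign p = (-1::int) ^ (card {x. p x \<noteq> x} div 2)"
  using assms
proof (induction "card {x. p x \<noteq> x}" arbitrary: p rule: less_induct)
  case less
  note fin = less.prems(1) and pS = less.prems(2) and inv = less.prems(3)
  define F where "F = {x. p x \<noteq> x}"
  have FS: "F \<subseteq> S" unfolding F_def using pS by (auto simp: permutes_def)
  have finF: "finite F" using FS fin finite_subset by blast
  show ?case
  proof (cases "F = {}")
    case True
    then have "p = id" unfolding F_def by auto
    then show ?thesis using True F_def by simp
  next
    case False
    then obtain x where xF: "x \<in> F" by blast
    define y where "y = p x"
    have yx: "y \<noteq> x" using xF unfolding F_def y_def by simp
    have py: "p y = x" unfolding y_def using inv by simp
    have yF: "y \<in> F" unfolding F_def using py yx by simp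
    define q where "q = transpose x y \<circ> p"
    have xS: "x \<in> S" and yS: "y \<in> S" using xF yF FS by auto
    have qS: "q permutes S" unfolding q_def
      by (rule permutes_compose[OF pS permutes_swap_id[OF xS yS]])
    have pz: "p z \<noteq> x \<and> p z \<noteq> y" if "z \<noteq> x" "z \<noteq> y" for z
      using that inv[of z] py y_def by metis
    have qz: "q z = (if z = x \<or> z = y then z else p z)" for z
      unfolding q_def using pz[of z] py y_def by (auto simp: transpose_def)
    have qinv: "q (q z) = z" for z
      using qz[of z] qz[of "p z"] pz[of z] inv[of z] by (auto split: if_splits)
    have Fq: "{z. q z \<noteq> z} = F - {x, y}" unfolding F_def using qz by auto
    have cardq: "card {z. q z \<noteq> z} = card F - 2" using Fq finF xF yF yx by (simp add: card_Diff_subset)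
    have c2: "card F \<ge> 2"
    proof -
      have "card {x, y} \<le> card F" using finF xF yF by (intro card_mono) auto
      then show ?thesis using yx by simp
    qed
    have IH: "even (card {z. q z \<noteq> z}) \<and> sign q = (-1::int) ^ (card {z. q z \<noteq> z} div 2)"
      by (rule less.hyps[OF _ fin qS qinv]) (use cardq c2 F_def in simp)
    have pq: "p = transpose x y \<circ> q" unfolding q_def by (simp add: comp_assoc[symmetric])
    have "sign p = sign (transpose x y) * sign q"
      unfolding pq by (rule sign_compose) (use permutation_permutes fin qS in \<open>auto simp: permutation_swap_id\<close>)
    also have "\<dots> = - sign q" using yx by (simp add: sign_swap_id)
    finally have sp: "sign p = - sign q" .
    have e: "card F = card {z. q z \<noteq> z} + 2" using cardq c2 by simp
    obtain m where m: "card {z. q z \<noteq> z} = 2 * m" using IH by blast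
    show ?thesis using IH sp e m unfolding F_def[symmetric] by simp
  qed
qed




lemma parity_step:
  fixes t T :: nat
  shows "(t * T) div 2 mod 2 = ((t div 2) * T + t * (T div 2)) mod 2"
proof -
  obtain c e where t: "t = 2 * c + e" and e: "e < 2" by (metis div_mult_mod_eq mod_less_divisor zero_less_numeral mult.commute)
  obtain a b where T: "T = 2 * a + b" and b: "b < 2" by (metis div_mult_mod_eq mod_less_divisor zero_less_numeral mult.commute)
  have be: "b * e < 2" using e b by (cases b; cases e) auto
  have 1: "t * T = b * e + 2 * (2*a*c + a*e + b*c)" unfolding t T by (simp add: algebra_simps)
  have 2: "(t * T) div 2 = 2*a*c + a*e + b*c" unfolding 1 using be by simp
  have 3: "t div 2 = c" "T div 2 = a" unfolding t T using e b by auto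
  have 4: "(t div 2) * T + t * (T div 2) = (a*e + b*c) + 2 * (2*a*c)" unfolding 3 unfolding t T
    by (simp add: algebra_simps)
  have 5: "2*a*c + a*e + b*c = (a*e + b*c) + 2 * (a*c)" by simp
  show ?thesis unfolding 2 4 5 by (simp only: mod_mult_self2)
qed

lemma mod2_cong:
  fixes S Q X t :: nat
  assumes "S mod 2 = Q mod 2"
  shows "(X + t * S) mod 2 = (X + t * Q) mod 2"
proof -
  have "(X + t * S) mod 2 = (X + t * (S mod 2)) mod 2" by (metis mod_add_right_eq mod_mult_right_eq)
  also have "\<dots> = (X + t * (Q mod 2)) mod 2" using assms by simp
  also have "\<dots> = (X + t * Q) mod 2" by (metis mod_add_right_eq mod_mult_right_eq)
  finally show ?thesis .
qed

lemma parity_sum: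
  fixes t :: "'i \<Rightarrow> nat"
  assumes "finite P" "\<And>i. i \<in> P \<Longrightarrow> t i > 0"
  shows "(\<Sum>i\<in>P. (t i div 2) * (prod t P div t i)) mod 2 = (prod t P div 2) mod 2"
  using assms
proof (induction P rule: finite_induct)
  case empty
  then show ?case by simp
next
  case (insert a P)
  let ?T = "prod t P"
  have ta: "t a > 0" using insert by simp
  have "(\<Sum>i\<in>insert a P. (t i div 2) * (prod t (insert a P) div t i))
      = (t a div 2) * ?T + (\<Sum>i\<in>P. (t i div 2) * (t a * (?T div t i)))"
  proof -
    have "prod t (insert a P) div t a = ?T" using insert ta by simp
    moreover have "(\<Sum>i\<in>P. (t i div 2) * (prod t (insert a P) div t i))
        = (\<Sum>i\<in>P. (t i div 2) * (t a * (?T div t i)))"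
    proof (rule sum.cong[OF refl])
      fix i assume i: "i \<in> P"
      have "t i dvd ?T" using i insert by (simp add: dvd_prodI)
      then have "t a * (?T div t i) = (t a * ?T) div t i" by (rule div_mult_swap)
      then show "(t i div 2) * (prod t (insert a P) div t i) = (t i div 2) * (t a * (?T div t i))"
        using insert by simp
    qed
    ultimately show ?thesis using insert by simp
  qed
  also have "\<dots> = (t a div 2) * ?T + t a * (\<Sum>i\<in>P. (t i div 2) * (?T div t i))"
    by (simp add: sum_distrib_left mult.left_commute)
  finally have eq: "(\<Sum>i\<in>insert a P. (t i div 2) * (prod t (insert a P) div t i))
      = (t a div 2) * ?T + t a * (\<Sum>i\<in>P. (t i div 2) * (?T div t i))" .
  have IH: "(\<Sum>i\<in>P. (t i div 2) * (?T div t i)) mod 2 = (?T div 2) mod 2" using insert by simp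
  have "((t a div 2) * ?T + t a * (\<Sum>i\<in>P. (t i div 2) * (?T div t i))) mod 2
      = ((t a div 2) * ?T + t a * (?T div 2)) mod 2"
    using mod2_cong[OF IH] .
  also have "\<dots> = (t a * ?T) div 2 mod 2" by (rule parity_step[symmetric])
  finally show ?case using eq insert by simp
qed

lemma num_divisors_prod:
  fixes n :: nat
  assumes n: "n > 0"
  shows "num_divisors n = (\<Prod>p\<in>prime_factors n. multiplicity p n + 1)"
proof -
  let ?P = "prime_factors n"
  let ?B = "PiE ?P (\<lambda>p. {0..multiplicity p n})"
  let ?f = "\<lambda>d. restrict (\<lambda>p. multiplicity p d) ?P"
  let ?g = "\<lambda>e. \<Prod>p\<in>?P. p ^ e p"
  have finP: "finite ?P" by simp
  have primeP: "\<And>p. p \<in> ?P \<Longrightarrow> prime p" by auto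
  have bij: "bij_betw ?f {d. d dvd n} ?B"
  proof (rule bij_betw_byWitness[where f' = ?g])
    show "\<forall>d\<in>{d. d dvd n}. ?g (?f d) = d"
    proof
      fix d assume "d \<in> {d. d dvd n}"
      then have dn: "d dvd n" by simp
      then have d0: "d > 0" using n by (auto intro!: Nat.gr0I)
      have sub: "prime_factors d \<subseteq> ?P" using dn n d0 by (simp add: dvd_prime_factors)
      have "?g (?f d) = (\<Prod>p\<in>?P. p ^ multiplicity p d)" by simp
      also have "\<dots> = (\<Prod>p\<in>prime_factors d. p ^ multiplicity p d)"
      proof (rule prod.mono_neutral_right[OF finP sub])
        show "\<forall>i\<in>?P - prime_factors d. i ^ multiplicity i d = 1"
          using d0 by (auto simp: prime_factors_multiplicity)
      qed
      also have "\<dots> = d" using prime_factorization_nat[OF d0] by simp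
      finally show "?g (?f d) = d" .
    qed
    show "\<forall>e\<in>?B. ?f (?g e) = e"
    proof
      fix e assume e: "e \<in> ?B"
      show "?f (?g e) = e"
      proof
        fix p
        show "?f (?g e) p = e p"
        proof (cases "p \<in> ?P")
          case True
          then show ?thesis using multiplicity_prod_prime_powers[OF finP primeP, of p e] primeP[OF True] by simp
        next
          case False
          then show ?thesis using e by (simp add: PiE_def extensional_def)
        qed
      qed
    qed
    show "?f ` {d. d dvd n} \<subseteq> ?B"
    proof
      fix x assume "x \<in> ?f ` {d. d dvd n}"
      then obtain d where dn: "d dvd n" and x: "x = ?f d" by blast
      have "multiplicity p d \<le> multiplicity p n" if "p \<in> ?P" for p
        using dn n primeP[OF that] by (intro dvd_imp_multiplicity_le) auto
      then show "x \<in> ?B" unfolding x by auto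
    qed
    show "?g ` ?B \<subseteq> {d. d dvd n}"
    proof
      fix x assume "x \<in> ?g ` ?B"
      then obtain e where e: "e \<in> ?B" and x: "x = ?g e" by blast
      have x0: "x \<noteq> 0" unfolding x using primeP by (auto simp: prime_gt_0_nat)
      have "x dvd n"
      proof (rule multiplicity_le_imp_dvd[OF x0])
        fix p :: nat assume p: "prime p"
        have m: "multiplicity p x = (if p \<in> ?P then e p else 0)"
          unfolding x using multiplicity_prod_prime_powers[OF finP primeP p] by simp
        show "multiplicity p x \<le> multiplicity p n" using e m by (auto simp: PiE_def)
      qed
      then show "x \<in> {d. d dvd n}" by simp
    qed
  qed
  have "num_divisors n = card ?B" unfolding num_divisors_def using bij_betw_same_card[OF bij] .
  also have "\<dots> = (\<Prod>p\<in>?P. multiplicity p n + 1)" by (simp add: card_PiE)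
  finally show ?thesis .
qed




lemma div_div_self_nat: "(d::nat) dvd n \<Longrightarrow> n > 0 \<Longrightarrow> n div (n div d) = d"
proof -
  assume d: "d dvd n" and n: "n > 0"
  then obtain k where k: "n = d * k" by blast
  then have "d > 0" "k > 0" using n by auto
  then show ?thesis using k by simp
qed

theorem mainTheorem2:
  fixes n :: nat and ds :: "nat list"
  assumes "n \<ge> 1"
    and "distinct ds" and "set ds = {d. d dvd n}"
  shows "det (mat (length ds) (length ds)
            (\<lambda>(i, j). ramanujan_sum (ds ! i) (int (n div (ds ! j)))))
         = complex_of_real (sqrt (real n) ^ num_divisors n) *
           (-1) ^ (\<Sum>p\<in>prime_factors n.
                     ((multiplicity p n + 1) div 2) * (num_divisors n div (multiplicity p n + 1)))"
proof -
  note n1 = assms(1) and dist = assms(2) and setds = assms(3)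
  have n0: "n > 0" using n1 by simp
  define N where "N = length ds"
  have Ntau: "N = num_divisors n" unfolding N_def num_divisors_def using distinct_card[OF dist] setds by simp
  have dvdn: "ds ! i dvd n" if "i < N" for i using setds that nth_mem unfolding N_def by fastforce
  have dpos: "ds ! i > 0" if "i < N" for i using dvdn[OF that] n0 by (auto intro!: Nat.gr0I)
  have inj: "inj_on ((!) ds) {0..<N}" using dist unfolding N_def by (simp add: inj_on_nth)
  have img: "(!) ds ` {0..<N} = {d. d dvd n}" unfolding N_def setds[symmetric]
    by (auto simp: in_set_conv_nth image_def) (metis atLeast0LessThan lessThan_iff)
  have bijds: "bij_betw ((!) ds) {0..<N} {d. d dvd n}" using inj img by (simp add: bij_betw_def)
  define A :: "complex mat" where "A = mat N N (\<lambda>(i, j). ramanujan_sum (ds ! i) (int (n div (ds ! j))))"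
  define Z :: "complex mat" where "Z = mat N N (\<lambda>(i, j). if ds ! j dvd ds ! i then 1 else 0)"
  define G :: "complex mat" where "G = mat N N (\<lambda>(i, j). if ds ! i * ds ! j dvd n then of_nat (ds ! i) else 0)"
  have AC: "A \<in> carrier_mat N N" and ZC: "Z \<in> carrier_mat N N" and GC: "G \<in> carrier_mat N N"
    unfolding A_def Z_def G_def by auto
  have ZA: "Z * A = G"
  proof (rule eq_matI)
    fix i j assume i: "i < dim_row G" and j: "j < dim_col G"
    then have i: "i < N" and j: "j < N" unfolding G_def by auto
    have "(Z * A) $$ (i, j) = (\<Sum>l\<in>{0..<N}. (if ds ! l dvd ds ! i then 1 else 0) * ramanujan_sum (ds ! l) (int (n div (ds ! j))))"
      using i j unfolding Z_def A_def by (simp add: scalar_prod_def)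
    also have "\<dots> = (\<Sum>l\<in>{0..<N}. if ds ! l dvd ds ! i then ramanujan_sum (ds ! l) (int (n div (ds ! j))) else 0)"
      by (rule sum.cong) auto
    also have "\<dots> = (\<Sum>l\<in>{l\<in>{0..<N}. ds ! l dvd ds ! i}. ramanujan_sum (ds ! l) (int (n div (ds ! j))))"
      by (rule sum.inter_filter[symmetric]) simp
    also have "\<dots> = (\<Sum>e\<in>{e. e dvd ds ! i}. ramanujan_sum e (int (n div (ds ! j))))"
    proof (rule sum.reindex_bij_betw)
      have "(!) ds ` {l\<in>{0..<N}. ds ! l dvd ds ! i} = {e. e dvd ds ! i}"
      proof
        show "(!) ds ` {l\<in>{0..<N}. ds ! l dvd ds ! i} \<subseteq> {e. e dvd ds ! i}" by auto
        show "{e. e dvd ds ! i} \<subseteq> (!) ds ` {l\<in>{0..<N}. ds ! l dvd ds ! i}"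
        proof
          fix e assume "e \<in> {e. e dvd ds ! i}"
          then have ei: "e dvd ds ! i" by simp
          then have "e \<in> {d. d dvd n}" using dvdn[OF i] dvd_trans by auto
          then obtain l where "l \<in> {0..<N}" "ds ! l = e" using img by (metis imageE)
          then show "e \<in> (!) ds ` {l\<in>{0..<N}. ds ! l dvd ds ! i}" using ei by auto
        qed
      qed
      moreover have sub: "{l\<in>{0..<N}. ds ! l dvd ds ! i} \<subseteq> {0..<N}" by blast
      ultimately show "bij_betw ((!) ds) {l\<in>{0..<N}. ds ! l dvd ds ! i} {e. e dvd ds ! i}"
        using inj_on_subset[OF inj sub] unfolding bij_betw_def by blast
    qed
    also have "\<dots> = (if int (ds ! i) dvd int (n div ds ! j) then of_nat (ds ! i) else 0)"
      using ram_divisor_sum[of "ds ! i"] dpos[OF i] by simp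
    also have "\<dots> = G $$ (i, j)"
    proof -
      have "ds ! i dvd n div ds ! j \<longleftrightarrow> ds ! i * ds ! j dvd n"
        using dvd_div_iff_mult[of "ds ! j" n "ds ! i"] dpos[OF j] dvdn[OF j] by simp
      then show ?thesis using i j unfolding G_def by simp
    qed
    finally show "(Z * A) $$ (i, j) = G $$ (i, j)" .
  next
    show "dim_row (Z * A) = dim_row G" "dim_col (Z * A) = dim_col G" unfolding Z_def A_def G_def by auto
  qed
  have detZ: "det Z = 1"
  proof -
    have "det Z = signof id * (\<Prod>i=0..<N. Z $$ (i, id i))"
      by (rule det_perm_support[OF ZC permutes_id inj dpos]) (auto simp: Z_def split: if_splits)
    also have "\<dots> = 1" unfolding Z_def by simp
    finally show ?thesis .
  qed
  define h where "h = the_inv_into {0..<N} ((!) ds)"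
  have h1: "h e < N" and h2: "ds ! (h e) = e" if "e dvd n" for e
    using the_inv_into_into[OF inj, of e "{0..<N}"] f_the_inv_into_f[OF inj, of e] img that
    unfolding h_def by auto
  have h3: "h (ds ! i) = i" if "i < N" for i using the_inv_into_f_f[OF inj] that unfolding h_def by simp
  define \<sigma> where "\<sigma> i = (if i < N then h (n div ds ! i) else i)" for i
  have ndiv: "n div ds ! i dvd n" if "i < N" for i using dvdn[OF that] by (metis dvd_div_mult_self dvd_triv_left)
  have s1: "\<sigma> i < N" and s2: "ds ! (\<sigma> i) = n div ds ! i" if "i < N" for i
    using h1[OF ndiv[OF that]] h2[OF ndiv[OF that]] that unfolding \<sigma>_def by auto
  have ssi: "\<sigma> (\<sigma> i) = i" for i
  proof (cases "i < N")
    case True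
    have "\<sigma> (\<sigma> i) = h (n div (n div ds ! i))" using s1[OF True] s2[OF True] unfolding \<sigma>_def by simp
    also have "\<dots> = h (ds ! i)" using div_div_self_nat[OF dvdn[OF True] n0] by simp
    finally show ?thesis using h3[OF True] by simp
  qed (simp add: \<sigma>_def)
  have sperm: "\<sigma> permutes {0..<N}"
    unfolding permutes_def
  proof (intro conjI allI impI)
    show "\<And>x. x \<notin> {0..<N} \<Longrightarrow> \<sigma> x = x" by (simp add: \<sigma>_def)
    show "\<exists>!x. \<sigma> x = y" for y by (metis ssi)
  qed
  have detG: "det G = signof \<sigma> * (\<Prod>i=0..<N. G $$ (i, \<sigma> i))"
  proof (rule det_perm_support[OF GC sperm inj dpos])
    fix i j assume i: "i < N" and j: "j < N" and nz: "G $$ (i, j) \<noteq> 0"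
    then have "ds ! i * ds ! j dvd n" unfolding G_def by (auto split: if_splits)
    then have "ds ! j dvd n div ds ! i"
      using dvd_div_iff_mult[of "ds ! i" n "ds ! j"] dpos[OF i] dvdn[OF i] by (simp add: mult.commute)
    then show "ds ! j dvd ds ! (\<sigma> i)" using s2[OF i] by simp
  qed
  have prodG: "(\<Prod>i=0..<N. G $$ (i, \<sigma> i)) = (\<Prod>i=0..<N. of_nat (ds ! i))"
  proof (rule prod.cong[OF refl])
    fix i assume "i \<in> {0..<N}"
    then have i: "i < N" by simp
    have "ds ! i * ds ! (\<sigma> i) = n" using s2[OF i] dvdn[OF i] by simp
    then show "G $$ (i, \<sigma> i) = of_nat (ds ! i)" using i s1[OF i] unfolding G_def by simp
  qed
  have si: "even (card {x. \<sigma> x \<noteq> x}) \<and> sign \<sigma> = (-1::int) ^ (card {x. \<sigma> x \<noteq> x} div 2)"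
    by (rule sign_involution[OF _ sperm ssi]) simp
  have nf: "{x. \<sigma> x \<noteq> x} = {i\<in>{0..<N}. \<sigma> i \<noteq> i}" by (auto simp: \<sigma>_def)
  let ?Fx = "{i\<in>{0..<N}. \<sigma> i = i}"
  have cardsum: "card {i\<in>{0..<N}. \<sigma> i \<noteq> i} + card ?Fx = N"
  proof -
    have "card ({i\<in>{0..<N}. \<sigma> i \<noteq> i} \<union> ?Fx) = card {i\<in>{0..<N}. \<sigma> i \<noteq> i} + card ?Fx"
      by (rule card_Un_disjoint) auto
    moreover have "{i\<in>{0..<N}. \<sigma> i \<noteq> i} \<union> ?Fx = {0..<N}" by auto
    ultimately show ?thesis by simp
  qed
  have Fxall: "\<forall>a\<in>?Fx. \<forall>b\<in>?Fx. a = b"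
  proof (intro ballI)
    fix a b assume a: "a \<in> ?Fx" and b: "b \<in> ?Fx"
    have aN: "a < N" and sa: "\<sigma> a = a" using a by auto
    have Ha: "ds ! a = n div ds ! a" using s2[OF aN] unfolding sa .
    have Xa: "ds ! a * (n div ds ! a) = n" by (rule dvd_mult_div_cancel[OF dvdn[OF aN]])
    have ea: "ds ! a * ds ! a = n" using Xa Ha by metis
    have bN: "b < N" and sb: "\<sigma> b = b" using b by auto
    have Hb: "ds ! b = n div ds ! b" using s2[OF bN] unfolding sb .
    have Xb: "ds ! b * (n div ds ! b) = n" by (rule dvd_mult_div_cancel[OF dvdn[OF bN]])
    have eb: "ds ! b * ds ! b = n" using Xb Hb by metis
    have "ds ! a = ds ! b"
    proof (rule ccontr)
      assume ne: "ds ! a \<noteq> ds ! b"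
      show False
      proof (cases "ds ! a < ds ! b")
        case True
        have "ds ! a * ds ! a < ds ! b * ds ! b" by (rule mult_strict_mono) (use True in auto)
        then show False using ea eb by linarith
      next
        case False
        then have lt: "ds ! b < ds ! a" using ne by linarith
        have "ds ! b * ds ! b < ds ! a * ds ! a" by (rule mult_strict_mono) (use lt in auto)
        then show False using ea eb by linarith
      qed
    qed
    then show "a = b" using inj_onD[OF inj] aN bN by simp
  qed
  have finFx: "finite ?Fx" by simp
  have Fx1: "card ?Fx \<le> Suc 0" using card_le_Suc0_iff_eq[OF finFx] Fxall by blast
  have arith: "even c \<Longrightarrow> c + f = M \<Longrightarrow> f \<le> Suc 0 \<Longrightarrow> c div 2 = M div 2" for c f M :: nat
    by presburger
  have half: "card {x. \<sigma> x \<noteq> x} div 2 = N div 2"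
    unfolding nf using arith[OF _ cardsum Fx1] si unfolding nf by blast
  have sgn: "(signof \<sigma> :: complex) = (-1) ^ (N div 2)"
    using si half by simp
  define P where "P = (\<Prod>d\<in>{d. d dvd n}. d)"
  have prodP: "(\<Prod>i=0..<N. of_nat (ds ! i) :: complex) = of_nat P"
  proof -
    have "(\<Prod>i=0..<N. ds ! i) = P" unfolding P_def
      using prod.reindex_bij_betw[OF bijds, of "\<lambda>d. d"] by simp
    then show ?thesis by (metis of_nat_prod)
  qed
  have PP: "P * P = n ^ N"
  proof -
    have fin: "finite {d. d dvd n}" using n0 by simp
    have "P = (\<Prod>d\<in>{d. d dvd n}. n div d)" unfolding P_def
    proof (rule prod.reindex_bij_witness[where i = "\<lambda>d. n div d" and j = "\<lambda>d. n div d"])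
      fix d assume "d \<in> {d. d dvd n}"
      then have d: "d dvd n" by simp
      show "n div (n div d) = d" using div_div_self_nat[OF d n0] .
    next
      fix d assume "d \<in> {d. d dvd n}"
      then have d: "d dvd n" by simp
      show "n div d \<in> {d. d dvd n}" using d by (metis dvd_div_mult_self dvd_triv_left mem_Collect_eq)
    next
      fix d assume "d \<in> {d. d dvd n}"
      then have d: "d dvd n" by simp
      show "n div (n div d) = d" using div_div_self_nat[OF d n0] .
    next
      fix d assume "d \<in> {d. d dvd n}"
      then have d: "d dvd n" by simp
      show "n div d \<in> {d. d dvd n}" using d by (metis dvd_div_mult_self dvd_triv_left mem_Collect_eq)
    next
      fix d assume "d \<in> {d. d dvd n}"
      then have d: "d dvd n" by simp
      show "n div (n div d) = d" using div_div_self_nat[OF d n0] .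
    qed
    then have "P * P = (\<Prod>d\<in>{d. d dvd n}. d) * (\<Prod>d\<in>{d. d dvd n}. n div d)"
      unfolding P_def by metis
    also have "\<dots> = (\<Prod>d\<in>{d. d dvd n}. d * (n div d))" by (rule prod.distrib[symmetric])
    also have "\<dots> = (\<Prod>d\<in>{d. d dvd n}. n)" by (rule prod.cong) auto
    also have "\<dots> = n ^ N" using Ntau unfolding num_divisors_def by simp
    finally show ?thesis .
  qed
  have sq: "sqrt (real n) ^ N = real P"
  proof -
    have "(sqrt (real n) ^ N)^2 = (real P)^2"
    proof -
      have "(sqrt (real n) ^ N)^2 = real n ^ N" by (simp add: real_sqrt_power[symmetric])
      also have "\<dots> = real (P * P)" using PP by simp
      finally show ?thesis by (simp add: power2_eq_square)
    qed
    then show ?thesis by simp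
  qed
  define t where "t p = multiplicity p n + 1" for p
  have Nprod: "N = prod t (prime_factors n)" unfolding Ntau t_def using num_divisors_prod[OF n0] .
  have par: "(\<Sum>p\<in>prime_factors n. ((multiplicity p n + 1) div 2) * (num_divisors n div (multiplicity p n + 1))) mod 2
        = (N div 2) mod 2"
    using parity_sum[of "prime_factors n" t] unfolding Nprod t_def Ntau[symmetric]
    by (simp add: Nprod[unfolded t_def])
  have sgn2: "(-1 :: complex) ^ (N div 2) = (-1) ^ (\<Sum>p\<in>prime_factors n. ((multiplicity p n + 1) div 2) * (num_divisors n div (multiplicity p n + 1)))"
    using par by (simp add: minus_one_power_iff even_iff_mod_2_eq_zero)
  have "det A = det G" using det_mult[OF ZC AC] ZA detZ by simp
  also have "\<dots> = (-1) ^ (N div 2) * of_nat P" using detG prodG prodP sgn by simp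
  finally have "det A = complex_of_real (sqrt (real n) ^ N) * (-1) ^ (N div 2)" using sq by simp
  then show ?thesis unfolding A_def N_def[symmetric] using sgn2 Ntau by simp
qed


end
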